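(* Let $n\ge0$ be an integer or $n=\infty$ and let $\Gamma\xrightarrow{\varphi}K\xrightarrow{\varphi'}L$ be homomorphisms of discrete groups. If $\varphi$ and $\varphi'\circ\varphi$ are boundedly $n$-acyclic, then $\varphi'$ is boundedly $n$-acyclic.
   Context: An $\mathbb{R}$-generated Banach $K$-module is one of the form $\ell^\infty(S,\mathbb{R})$ for a $K$-set $S$, with $(k\cdot f)(s)=f(k^{-1}s)$. For a homomorphism $\psi\colon\Gamma\to K$, $\psi^{-1}V$ is $V$ with $\Gamma$ acting via $\psi$, and the restriction map $H^\bullet_b(\psi;V)\colon H^\bullet_b(K;V)\to H^\bullet_b(\Gamma;\psi^{-1}V)$ is induced by precomposition with $\psi$ on invariant bounded cochains of the standard resolution. $\psi$ is boundedly $n$-acyclic if $H^i_b(\psi;V)$ is an isomorphism for $i\le n$ and injective for $i=n+1$ for every $\mathbb{R}$-generated Banach $K$-module $V$. *)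

theory Defs
  imports "HOL-Algebra.Group_Action" "HOL-Library.Extended_Nat"
begin

text \<open>Bounded cohomology of a discrete group G with coefficients in the
R-generated Banach G-module l-infinity(S,R), for a G-set S given by an action
act (a homomorphism G to BijGroup S). It is computed by the standard
homogeneous resolution: an n-cochain is a map from (n+1)-tuples of group
elements (lists of length n+1) to l-infinity(S,R); we represent a cochain as
f :: 'g list => 's => real, only its values on tuples in the carrier and
points of S being relevant.\<close>

definition tuples :: "('g, 'x) monoid_scheme \<Rightarrow> nat \<Rightarrow> 'g list set" where
  "tuples G n = {gs. length gs = Suc n \<and> set gs \<subseteq> carrier G}"

text \<open>Bounded G-invariant n-cochains: uniformly bounded (sup norm) and
equivariant, f(k g_0,...,k g_n) = k . f(g_0,...,g_n), where (k.v)(s) = v(k^-1 s).\<close>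
definition bcochain ::
  "('g, 'x) monoid_scheme \<Rightarrow> 's set \<Rightarrow> ('g \<Rightarrow> 's \<Rightarrow> 's) \<Rightarrow> nat \<Rightarrow> ('g list \<Rightarrow> 's \<Rightarrow> real) \<Rightarrow> bool" where
  "bcochain G S act n f \<longleftrightarrow>
     (\<exists>C::real. \<forall>gs\<in>tuples G n. \<forall>s\<in>S. \<bar>f gs s\<bar> \<le> C) \<and>
     (\<forall>k\<in>carrier G. \<forall>gs\<in>tuples G n. \<forall>s\<in>S.
        f (map (\<lambda>g. k \<otimes>\<^bsub>G\<^esub> g) gs) s = f gs (act (inv\<^bsub>G\<^esub> k) s))"

definition cobdry :: "('g list \<Rightarrow> 's \<Rightarrow> real) \<Rightarrow> 'g list \<Rightarrow> 's \<Rightarrow> real" where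
  "cobdry f gs s = (\<Sum>i<length gs. (-1) ^ i * f (take i gs @ drop (Suc i) gs) s)"

definition bcocycle ::
  "('g, 'x) monoid_scheme \<Rightarrow> 's set \<Rightarrow> ('g \<Rightarrow> 's \<Rightarrow> 's) \<Rightarrow> nat \<Rightarrow> ('g list \<Rightarrow> 's \<Rightarrow> real) \<Rightarrow> bool" where
  "bcocycle G S act n f \<longleftrightarrow> bcochain G S act n f \<and>
     (\<forall>gs\<in>tuples G (Suc n). \<forall>s\<in>S. cobdry f gs s = 0)"

definition bcobdry ::
  "('g, 'x) monoid_scheme \<Rightarrow> 's set \<Rightarrow> ('g \<Rightarrow> 's \<Rightarrow> 's) \<Rightarrow> nat \<Rightarrow> ('g list \<Rightarrow> 's \<Rightarrow> real) \<Rightarrow> bool" where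
  "bcobdry G S act n f \<longleftrightarrow>
     (if n = 0 then (\<forall>gs\<in>tuples G 0. \<forall>s\<in>S. f gs s = 0)
      else (\<exists>b. bcochain G S act (n - 1) b \<and>
              (\<forall>gs\<in>tuples G n. \<forall>s\<in>S. f gs s = cobdry b gs s)))"

definition restr :: "('a \<Rightarrow> 'b) \<Rightarrow> ('b list \<Rightarrow> 's \<Rightarrow> real) \<Rightarrow> 'a list \<Rightarrow> 's \<Rightarrow> real" where
  "restr \<psi> f = (\<lambda>gs s. f (map \<psi> gs) s)"

text \<open>H^n_b(psi;V) : H^n_b(K;V) -> H^n_b(Gamma;psi^-1 V) injective, resp.
surjective, written out on representatives (the map is linear).\<close>
definition Hb_inj ::
  "('a, 'x) monoid_scheme \<Rightarrow> ('b, 'y) monoid_scheme \<Rightarrow> ('a \<Rightarrow> 'b) \<Rightarrow> 's set \<Rightarrow> ('b \<Rightarrow> 's \<Rightarrow> 's) \<Rightarrow> nat \<Rightarrow> bool" where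
  "Hb_inj \<Gamma> K \<psi> S act n \<longleftrightarrow>
     (\<forall>f. bcocycle K S act n f \<and> bcobdry \<Gamma> S (\<lambda>g. act (\<psi> g)) n (restr \<psi> f)
          \<longrightarrow> bcobdry K S act n f)"

definition Hb_surj ::
  "('a, 'x) monoid_scheme \<Rightarrow> ('b, 'y) monoid_scheme \<Rightarrow> ('a \<Rightarrow> 'b) \<Rightarrow> 's set \<Rightarrow> ('b \<Rightarrow> 's \<Rightarrow> 's) \<Rightarrow> nat \<Rightarrow> bool" where
  "Hb_surj \<Gamma> K \<psi> S act n \<longleftrightarrow>
     (\<forall>c. bcocycle \<Gamma> S (\<lambda>g. act (\<psi> g)) n c \<longrightarrow>
        (\<exists>f. bcocycle K S act n f \<and>
             bcobdry \<Gamma> S (\<lambda>g. act (\<psi> g)) n (\<lambda>gs s. c gs s - restr \<psi> f gs s)))"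

text \<open>psi is boundedly n-acyclic (n possibly infinite), tested against all
R-generated Banach K-modules l-infinity(S,R) with S a K-set whose points lie in
the type 's.\<close>
definition bdd_acyclic ::
  "'s itself \<Rightarrow> ('a, 'x) monoid_scheme \<Rightarrow> ('b, 'y) monoid_scheme \<Rightarrow> ('a \<Rightarrow> 'b) \<Rightarrow> enat \<Rightarrow> bool" where
  "bdd_acyclic _ \<Gamma> K \<psi> n \<longleftrightarrow>
     (\<forall>(S::'s set) act. group_action K S act \<longrightarrow>
        (\<forall>i::nat. (enat i \<le> n \<longrightarrow> Hb_inj \<Gamma> K \<psi> S act i \<and> Hb_surj \<Gamma> K \<psi> S act i) \<and>
                 (enat i = n \<longrightarrow> Hb_inj \<Gamma> K \<psi> S act (Suc i))))"

end

theory Submission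
  imports Defs
begin

lemma tuples_map:
  assumes "\<psi> \<in> hom G H" "gs \<in> tuples G n"
  shows "map \<psi> gs \<in> tuples H n"
  using assms by (auto simp: tuples_def hom_def)

lemma cobdry_restr: "cobdry (restr \<psi> f) gs s = cobdry f (map \<psi> gs) s"
  by (simp add: cobdry_def restr_def take_map drop_map)

lemma bcochain_restr:
  assumes G: "group G" and H: "group H" and h: "\<psi> \<in> hom G H"
    and b: "bcochain H S act n b"
  shows "bcochain G S (\<lambda>g. act (\<psi> g)) n (restr \<psi> b)"
proof -
  interpret gh: group_hom G H \<psi> using G H h by (simp add: group_hom_def group_hom_axioms_def)
  obtain C where C: "\<forall>gs\<in>tuples H n. \<forall>s\<in>S. \<bar>b gs s\<bar> \<le> C"
    using b by (auto simp: bcochain_def)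
  have eq: "\<forall>k\<in>carrier H. \<forall>gs\<in>tuples H n. \<forall>s\<in>S.
        b (map (\<lambda>g. k \<otimes>\<^bsub>H\<^esub> g) gs) s = b gs (act (inv\<^bsub>H\<^esub> k) s)"
    using b by (auto simp: bcochain_def)
  show ?thesis
    unfolding bcochain_def
  proof (intro conjI)
    show "\<exists>C. \<forall>gs\<in>tuples G n. \<forall>s\<in>S. \<bar>restr \<psi> b gs s\<bar> \<le> C"
      using C tuples_map[OF h] by (auto simp: restr_def)
    show "\<forall>k\<in>carrier G. \<forall>gs\<in>tuples G n. \<forall>s\<in>S.
        restr \<psi> b (map (\<lambda>g. k \<otimes>\<^bsub>G\<^esub> g) gs) s = restr \<psi> b gs (act (\<psi> (inv\<^bsub>G\<^esub> k)) s)"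
    proof (intro ballI)
      fix k gs s assume k: "k \<in> carrier G" and gs: "gs \<in> tuples G n" and s: "s \<in> S"
      have "map \<psi> (map (\<lambda>g. k \<otimes>\<^bsub>G\<^esub> g) gs) = map (\<lambda>g. \<psi> k \<otimes>\<^bsub>H\<^esub> g) (map \<psi> gs)"
        using gs k by (auto simp: tuples_def)
      then show "restr \<psi> b (map (\<lambda>g. k \<otimes>\<^bsub>G\<^esub> g) gs) s = restr \<psi> b gs (act (\<psi> (inv\<^bsub>G\<^esub> k)) s)"
      proof -
        have "b (map (\<lambda>g. \<psi> k \<otimes>\<^bsub>H\<^esub> g) (map \<psi> gs)) s = b (map \<psi> gs) (act (inv\<^bsub>H\<^esub> (\<psi> k)) s)"
          using eq tuples_map[OF h gs] k s by (simp del: map_map)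
        then show ?thesis using \<open>map \<psi> (map (\<lambda>g. k \<otimes>\<^bsub>G\<^esub> g) gs) = _\<close> k
          by (simp add: restr_def del: map_map)
      qed
    qed
  qed
qed

lemma bcocycle_restr:
  assumes G: "group G" and H: "group H" and h: "\<psi> \<in> hom G H"
    and b: "bcocycle H S act n f"
  shows "bcocycle G S (\<lambda>g. act (\<psi> g)) n (restr \<psi> f)"
  using b bcochain_restr[OF G H h] tuples_map[OF h]
  by (auto simp: bcocycle_def cobdry_restr)

lemma bcobdry_restr:
  assumes G: "group G" and H: "group H" and h: "\<psi> \<in> hom G H"
    and b: "bcobdry H S act n f"
  shows "bcobdry G S (\<lambda>g. act (\<psi> g)) n (restr \<psi> f)"
proof (cases "n = 0")
  case True then show ?thesis using b tuples_map[OF h] by (auto simp: bcobdry_def restr_def)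
next
  case False
  then obtain c where c: "bcochain H S act (n - 1) c"
    and e: "\<forall>gs\<in>tuples H n. \<forall>s\<in>S. f gs s = cobdry c gs s"
    using b by (auto simp: bcobdry_def)
  show ?thesis using False bcochain_restr[OF G H h c] e tuples_map[OF h]
    unfolding bcobdry_def by (auto simp: cobdry_restr intro!: exI[of _ "restr \<psi> c"]) (simp add: restr_def)
qed

lemma cobdry_diff: "cobdry (\<lambda>gs s. f gs s - g gs s) gs s = cobdry f gs s - cobdry g gs s"
  by (simp add: cobdry_def sum_subtractf right_diff_distrib)

lemma bcocycle_diff:
  assumes "bcocycle G S act n f" "bcocycle G S act n g"
  shows "bcocycle G S act n (\<lambda>gs s. f gs s - g gs s)"
proof -
  obtain C1 where C1: "\<forall>gs\<in>tuples G n. \<forall>s\<in>S. \<bar>f gs s\<bar> \<le> C1"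
    using assms by (auto simp: bcocycle_def bcochain_def)
  obtain C2 where C2: "\<forall>gs\<in>tuples G n. \<forall>s\<in>S. \<bar>g gs s\<bar> \<le> C2"
    using assms by (auto simp: bcocycle_def bcochain_def)
  have "\<forall>gs\<in>tuples G n. \<forall>s\<in>S. \<bar>f gs s - g gs s\<bar> \<le> C1 + C2"
  proof (intro ballI)
    fix gs s assume "gs \<in> tuples G n" "s \<in> S"
    then have "\<bar>f gs s\<bar> \<le> C1" "\<bar>g gs s\<bar> \<le> C2" using C1 C2 by auto
    then show "\<bar>f gs s - g gs s\<bar> \<le> C1 + C2" by linarith
  qed
  then show ?thesis using assms
    unfolding bcocycle_def bcochain_def by (auto simp: cobdry_diff)
qed

lemma restr_comp: "restr (\<phi>' \<circ> \<phi>) f = restr \<phi> (restr \<phi>' f)"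
  by (simp add: restr_def fun_eq_iff)

lemma group_action_comp:
  assumes K: "group K" and L: "group L" and h: "\<phi>' \<in> hom K L"
    and a: "group_action L S act"
  shows "group_action K S (\<lambda>k. act (\<phi>' k))"
proof -
  have gh: "group_hom L (BijGroup S) act" using a by (simp add: group_action_def)
  then have "act \<in> hom L (BijGroup S)" by (simp add: group_hom_def group_hom_axioms_def)
  then have "(\<lambda>k. act (\<phi>' k)) \<in> hom K (BijGroup S)"
    using h by (auto simp: hom_def)
  then show ?thesis using K gh
    by (simp add: group_action_def group_hom_def group_hom_axioms_def)
qed

theorem mainTheorem19:
  fixes \<Gamma> :: "'a monoid" and K :: "'b monoid" and L :: "'c monoid"
    and \<phi> :: "'a \<Rightarrow> 'b" and \<phi>' :: "'b \<Rightarrow> 'c" and n :: enat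
  assumes "group \<Gamma>" and "group K" and "group L"
    and "\<phi> \<in> hom \<Gamma> K" and "\<phi>' \<in> hom K L"
    and "bdd_acyclic TYPE('s) \<Gamma> K \<phi> n"
    and "bdd_acyclic TYPE('s) \<Gamma> L (\<phi>' \<circ> \<phi>) n"
  shows "bdd_acyclic TYPE('s) K L \<phi>' n"
proof -
  note G = assms(1) and K = assms(2) and L = assms(3) and h1 = assms(4) and h2 = assms(5)
  have h12: "\<phi>' \<circ> \<phi> \<in> hom \<Gamma> L" using h1 h2 by (auto simp: hom_def Pi_def)
  have actcomp: "(\<lambda>g. act ((\<phi>' \<circ> \<phi>) g)) = (\<lambda>g. (\<lambda>k. act (\<phi>' k)) (\<phi> g))" for act :: "'c \<Rightarrow> 's \<Rightarrow> 's"
    by simp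
  show ?thesis unfolding bdd_acyclic_def
  proof (rule allI, rule allI, rule impI)
    fix S :: "'s set" and act assume a: "group_action L S act"
    have aK: "group_action K S (\<lambda>k. act (\<phi>' k))" using group_action_comp[OF K L h2 a] .
    have A1: "\<And>i. enat i \<le> n \<Longrightarrow> Hb_inj \<Gamma> K \<phi> S (\<lambda>k. act (\<phi>' k)) i"
      using assms(6) aK unfolding bdd_acyclic_def by blast
    have A2: "\<And>i. enat i \<le> n \<Longrightarrow> Hb_inj \<Gamma> L (\<phi>' \<circ> \<phi>) S act i \<and> Hb_surj \<Gamma> L (\<phi>' \<circ> \<phi>) S act i"
      and A3: "\<And>i. enat i = n \<Longrightarrow> Hb_inj \<Gamma> L (\<phi>' \<circ> \<phi>) S act (Suc i)"
      using assms(7) a unfolding bdd_acyclic_def by blast+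
    have inj: "Hb_inj K L \<phi>' S act j" if "Hb_inj \<Gamma> L (\<phi>' \<circ> \<phi>) S act j" for j
      unfolding Hb_inj_def
    proof (intro allI impI)
      fix f assume f: "bcocycle L S act j f \<and> bcobdry K S (\<lambda>g. act (\<phi>' g)) j (restr \<phi>' f)"
      have "bcobdry \<Gamma> S (\<lambda>g. act ((\<phi>' \<circ> \<phi>) g)) j (restr (\<phi>' \<circ> \<phi>) f)"
        using bcobdry_restr[OF G K h1, of S "\<lambda>g. act (\<phi>' g)" j "restr \<phi>' f"] f
        by (simp add: restr_comp)
      then show "bcobdry L S act j f" using that f unfolding Hb_inj_def by blast
    qed
    have surj: "Hb_surj K L \<phi>' S act i" if i: "enat i \<le> n" for i
      unfolding Hb_surj_def
    proof (intro allI impI)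
      fix c assume c: "bcocycle K S (\<lambda>g. act (\<phi>' g)) i c"
      have rc: "bcocycle \<Gamma> S (\<lambda>g. act ((\<phi>' \<circ> \<phi>) g)) i (restr \<phi> c)"
        using bcocycle_restr[OF G K h1 c] by simp
      obtain f where f: "bcocycle L S act i f"
        and fb: "bcobdry \<Gamma> S (\<lambda>g. act ((\<phi>' \<circ> \<phi>) g)) i
                   (\<lambda>gs s. restr \<phi> c gs s - restr (\<phi>' \<circ> \<phi>) f gs s)"
        using A2[OF i] rc unfolding Hb_surj_def by blast
      have fK: "bcocycle K S (\<lambda>g. act (\<phi>' g)) i (restr \<phi>' f)"
        using bcocycle_restr[OF K L h2 f] .
      define d where "d = (\<lambda>gs s. c gs s - restr \<phi>' f gs s)"
      have d: "bcocycle K S (\<lambda>g. act (\<phi>' g)) i d"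
        unfolding d_def using bcocycle_diff[OF c fK] .
      have "restr \<phi> d = (\<lambda>gs s. restr \<phi> c gs s - restr (\<phi>' \<circ> \<phi>) f gs s)"
        by (simp add: d_def restr_def fun_eq_iff)
      then have "bcobdry \<Gamma> S (\<lambda>g. act (\<phi>' (\<phi> g))) i (restr \<phi> d)"
        using fb by simp
      then have "bcobdry K S (\<lambda>g. act (\<phi>' g)) i d"
        using A1[OF i] d unfolding Hb_inj_def by blast
      then show "\<exists>f. bcocycle L S act i f \<and>
             bcobdry K S (\<lambda>g. act (\<phi>' g)) i (\<lambda>gs s. c gs s - restr \<phi>' f gs s)"
        using f unfolding d_def by blast
    qed
    show "\<forall>i. (enat i \<le> n \<longrightarrow> Hb_inj K L \<phi>' S act i \<and> Hb_surj K L \<phi>' S act i) \<and>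
               (enat i = n \<longrightarrow> Hb_inj K L \<phi>' S act (Suc i))"
      using inj surj A2 A3 by blast
  qed
qed

end
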